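(* For all integers $m$ and $n$, \[ \sum_{k = 1}^n ( - 1)^{k - 1} F_{mk}^{\,4} = \frac{F_{mn} F_{mn + m} \left\{ (-1)^{n-1}L_m L_{mn} L_{mn + m} + (-1)^{n(m-1)}4L_{2m} \right\}}{5L_m L_{2m}}\,. \]
   Context: $F_i$ and $L_i$ denote the Fibonacci and Lucas numbers, defined for all $i\in\mathbb{Z}$ by $F_i=F_{i-1}+F_{i-2}$, $F_0=0$, $F_1=1$, and $L_i=L_{i-1}+L_{i-2}$, $L_0=2$, $L_1=1$; equivalently $F_{-i}=(-1)^{i-1}F_i$ and $L_{-i}=(-1)^iL_i$. Summation convention for an arbitrary integer upper limit: $\sum_{k=a}^{a-1} f(k)=0$, and for $n<a-1$, $\sum_{k=a}^{n} f(k) = -\sum_{k=n+1}^{a-1} f(k)$. *)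

theory Defs
  imports Complex_Main
begin

fun fibN :: "nat \<Rightarrow> int" where
  "fibN 0 = 0"
| "fibN (Suc 0) = 1"
| "fibN (Suc (Suc n)) = fibN (Suc n) + fibN n"

fun lucN :: "nat \<Rightarrow> int" where
  "lucN 0 = 2"
| "lucN (Suc 0) = 1"
| "lucN (Suc (Suc n)) = lucN (Suc n) + lucN n"

definition fibZ :: "int \<Rightarrow> int" where
  "fibZ i = (if 0 \<le> i then fibN (nat i) else (-1) ^ (nat (-i) + 1) * fibN (nat (-i)))"

definition lucZ :: "int \<Rightarrow> int" where
  "lucZ i = (if 0 \<le> i then lucN (nat i) else (-1) ^ (nat (-i)) * lucN (nat (-i)))"

text \<open>Sum over k = a..n with arbitrary integer upper limit:
  empty for n = a - 1, and minus the sum over n+1..a-1 for n < a - 1.\<close>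
definition sumZ :: "(int \<Rightarrow> 'b::ab_group_add) \<Rightarrow> int \<Rightarrow> int \<Rightarrow> 'b" where
  "sumZ f a n = (if a \<le> n + 1 then sum f {a..n} else - sum f {n+1..a-1})"

end

theory Submission
  imports Defs
begin

definition phi :: real where "phi = (1 + sqrt 5) / 2"
definition psi :: real where "psi = (1 - sqrt 5) / 2"

lemma phipsi: "phi * psi = -1" "phi - psi = sqrt 5" "phi \<noteq> 0" "psi \<noteq> 0"
  "phi^2 = phi + 1" "psi^2 = psi + 1"
proof -
  have s: "sqrt 5 * sqrt 5 = (5::real)" by simp
  show 1: "phi * psi = -1" unfolding phi_def psi_def by (simp add: field_simps s)
  show "phi - psi = sqrt 5" unfolding phi_def psi_def by (simp add: field_simps)
  show "phi \<noteq> 0" "psi \<noteq> 0" using 1 by auto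
  show "phi^2 = phi + 1" unfolding phi_def by (simp add: field_simps power2_eq_square s)
  show "psi^2 = psi + 1" unfolding psi_def by (simp add: field_simps power2_eq_square s)
qed

lemma fibN_binet: "real_of_int (fibN n) = (phi^n - psi^n) / sqrt 5"
proof (induction n rule: fibN.induct)
  case 1 then show ?case by simp
next
  case 2 then show ?case using phipsi(2) by simp
next
  case (3 n)
  have a: "phi^(Suc (Suc n)) = phi^(Suc n) + phi^n"
  proof -
    have "phi^(Suc (Suc n)) = phi^2 * phi^n" by (simp add: power2_eq_square)
    also have "... = phi^(Suc n) + phi^n" using phipsi(5) by (simp add: distrib_right)
    finally show ?thesis .
  qed
  have b: "psi^(Suc (Suc n)) = psi^(Suc n) + psi^n"
  proof -
    have "psi^(Suc (Suc n)) = psi^2 * psi^n" by (simp add: power2_eq_square)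
    also have "... = psi^(Suc n) + psi^n" using phipsi(6) by (simp add: distrib_right)
    finally show ?thesis .
  qed
  have "real_of_int (fibN (Suc (Suc n))) = real_of_int (fibN (Suc n)) + real_of_int (fibN n)" by simp
  also have "... = (phi^(Suc n) - psi^(Suc n) + (phi^n - psi^n)) / sqrt 5"
    using 3 by (simp add: add_divide_distrib)
  also have "... = (phi^(Suc (Suc n)) - psi^(Suc (Suc n))) / sqrt 5" using a b by simp
  finally show ?case .
qed

lemma lucN_binet: "real_of_int (lucN n) = phi^n + psi^n"
proof (induction n rule: lucN.induct)
  case 1 then show ?case by simp
next
  case 2 then show ?case unfolding phi_def psi_def by (simp add: field_simps)
next
  case (3 n)
  have a: "phi^(Suc (Suc n)) = phi^(Suc n) + phi^n"
  proof -
    have "phi^(Suc (Suc n)) = phi^2 * phi^n" by (simp add: power2_eq_square)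
    also have "... = phi^(Suc n) + phi^n" using phipsi(5) by (simp add: distrib_right)
    finally show ?thesis .
  qed
  have b: "psi^(Suc (Suc n)) = psi^(Suc n) + psi^n"
  proof -
    have "psi^(Suc (Suc n)) = psi^2 * psi^n" by (simp add: power2_eq_square)
    also have "... = psi^(Suc n) + psi^n" using phipsi(6) by (simp add: distrib_right)
    finally show ?thesis .
  qed
  show ?case using 3 a b by simp
qed

lemma lucN_pos: "lucN n > 0"
  by (induction n rule: lucN.induct) auto

lemma neg_powi: "phi powi (- int k) = (-1)^k * psi^k" "psi powi (- int k) = (-1)^k * phi^k"
proof -
  have ip: "inverse phi = - psi" using phipsi(1,3) by (simp add: field_simps)
  have "phi powi (- int k) = inverse (phi ^ k)" by (simp add: power_int_minus)
  also have "... = (inverse phi) ^ k" by (rule power_inverse[symmetric])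
  also have "... = (-1)^k * psi^k" unfolding ip by (rule power_minus)
  finally show "phi powi (- int k) = (-1)^k * psi^k" .
  have iq: "inverse psi = - phi" using phipsi(1,4) by (simp add: field_simps)
  have "psi powi (- int k) = inverse (psi ^ k)" by (simp add: power_int_minus)
  also have "... = (inverse psi) ^ k" by (rule power_inverse[symmetric])
  also have "... = (-1)^k * phi^k" unfolding iq by (rule power_minus)
  finally show "psi powi (- int k) = (-1)^k * phi^k" .
qed

lemma fibZ_binet: "real_of_int (fibZ i) = (phi powi i - psi powi i) / sqrt 5"
proof (cases "0 \<le> i")
  case True
  then obtain k where k: "i = int k" by (metis nonneg_int_cases)
  show ?thesis unfolding fibZ_def k by (simp add: fibN_binet)
next
  case False
  define k where "k = nat (- i)"
  have k: "i = - int k" using False unfolding k_def by simp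
  have "fibZ i = (-1) ^ (k + 1) * fibN k" unfolding fibZ_def using False k by simp
  then have "real_of_int (fibZ i) = (-1) ^ (k + 1) * ((phi^k - psi^k) / sqrt 5)"
    by (simp add: fibN_binet)
  also have "... = ((-1)^k * psi^k - (-1)^k * phi^k) / sqrt 5"
    by (simp add: algebra_simps diff_divide_distrib)
  finally show ?thesis unfolding k neg_powi .
qed

lemma lucZ_binet: "real_of_int (lucZ i) = phi powi i + psi powi i"
proof (cases "0 \<le> i")
  case True
  then obtain k where k: "i = int k" by (metis nonneg_int_cases)
  show ?thesis unfolding lucZ_def k by (simp add: lucN_binet)
next
  case False
  define k where "k = nat (- i)"
  have k: "i = - int k" using False unfolding k_def by simp
  have "lucZ i = (-1) ^ k * lucN k" unfolding lucZ_def using False k by simp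
  then have "real_of_int (lucZ i) = (-1) ^ k * (phi^k + psi^k)"
    by (simp add: lucN_binet)
  also have "... = (-1)^k * phi^k + (-1)^k * psi^k"
    by (simp add: algebra_simps)
  finally show ?thesis unfolding k neg_powi by simp
qed

lemma lucZ_nz: "lucZ i \<noteq> 0"
  unfolding lucZ_def using lucN_pos[of "nat i"] lucN_pos[of "nat (-i)"] by auto

lemma sumZ_step:
  fixes f :: "int \<Rightarrow> real"
  shows "sumZ f 1 n - sumZ f 1 (n - 1) = f n"
proof (cases "1 \<le> n")
  case True
  have "{1..n} = insert n {1..n-1}" using True by auto
  then have "sum f {1..n} = f n + sum f {1..n-1}" by simp
  then show ?thesis using True unfolding sumZ_def by simp
next
  case False
  have "{n..0} = insert n {n+1..0}" using False by auto
  then have "sum f {n..0} = f n + sum f {n+1..0}" by simp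
  then show ?thesis using False unfolding sumZ_def by (auto simp: not_le)
qed

lemma diff_induct:
  fixes S R :: "int \<Rightarrow> real"
  assumes "S 0 = R 0" and "\<And>n. S n - S (n-1) = R n - R (n-1)"
  shows "S n = R n"
proof (induction n rule: int_induct[where k=0])
  case base then show ?case using assms(1) .
next
  case (step1 i) then show ?case using assms(2)[of "i+1"] by simp
next
  case (step2 i) then show ?case using assms(2)[of i] by simp
qed

lemma keyp:
  fixes a b x y s g t :: real
  assumes ab: "a*b = s" and xy: "x*y = t" and g2: "g*g = 1"
   and t: "(s = 1 \<and> t = 1) \<or> (s = -1 \<and> t = g)"
  shows "(x-y)*(x*a-y*b)*(-g*(a+b)*(x+y)*(x*a+y*b) + 4*t*g*(a^2+b^2))
     - (s*b*x - s*a*y)*(x-y)*(g*(a+b)*(s*b*x+s*a*y)*(x+y) - 4*t*s*g*(a^2+b^2))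
     = -g*(x-y)^4 * ((a+b)*(a^2+b^2))"
  using t
proof
  assume "s = 1 \<and> t = 1" then show ?thesis using ab xy g2 by algebra
next
  assume "s = -1 \<and> t = g" then show ?thesis using ab xy g2 by algebra
qed

lemma m1_pow: "(-1::real)^j = 1 \<or> (-1::real)^j = -1"
  by (cases "even j") auto

lemma m1_powi: "(-1::real) powi k = 1 \<or> (-1::real) powi k = -1"
proof (cases "0 \<le> k")
  case True
  then obtain j where "k = int j" by (metis nonneg_int_cases)
  then show ?thesis using m1_pow[of j] by simp
next
  case False
  define j where "j = nat (- k)"
  have "k = - int j" using False unfolding j_def by simp
  then show ?thesis using m1_pow[of j] by (simp add: power_int_minus_one_minus)
qed

lemma keyq:
  fixes a b x y s g :: real
  assumes ab: "a*b = s" and s2: "s*s = 1" and g2: "g*g = 1"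
   and t: "(s = 1 \<and> x*y = 1) \<or> (s = -1 \<and> x*y = g)"
  shows "(x-y)*(x*a-y*b)*((-g)*(a+b)*(x+y)*(x*a+y*b) + x*y*g*4*(a^2+b^2))
     - (s*b*x - s*a*y)*((s*b*x)*a-(s*a*y)*b)*((-(-g))*(a+b)*(s*b*x+s*a*y)*((s*b*x)*a+(s*a*y)*b) + (s*b*x)*(s*a*y)*(-g)*4*(a^2+b^2))
     = -g*(x-y)^4 * ((a+b)*(a^2+b^2))"
  using t
proof
  assume "s = 1 \<and> x*y = 1" then show ?thesis using ab g2 by algebra
next
  assume "s = -1 \<and> x*y = g" then show ?thesis using ab g2 by algebra
qed

lemma frac5:
  fixes r A B C E :: real
  assumes "r*r = 5"
  shows "A/r*(B/r)*C/(5*E) = A*B*C/(25*E)"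
proof -
  have "A/r*(B/r) = A*B/(r*r)" by simp
  then show ?thesis using assms by simp
qed

lemma frac5b:
  fixes r A B C E1 E2 :: real
  assumes "r*r = 5"
  shows "A/r*(B/r)*C/(5*E1*E2) = A*B*C/(25*(E1*E2))"
proof -
  have "A/r*(B/r) = A*B/(r*r)" by simp
  then show ?thesis using assms by (simp add: mult.assoc)
qed

lemma pow4_5:
  fixes r A :: real
  assumes "r*r = 5"
  shows "(A/r)^4 = A^4/25"
proof -
  have "(A/r)^4 = A^4/((r*r)*(r*r))" by (simp add: power_divide eval_nat_numeral)
  then show ?thesis using assms by simp
qed

theorem theorem3:
  fixes m n :: int
  shows "sumZ (\<lambda>k. (-1) powi (k - 1) * (real_of_int (fibZ (m * k))) ^ 4) 1 n =
    real_of_int (fibZ (m * n)) * real_of_int (fibZ (m * n + m)) *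
      ((-1) powi (n - 1) * real_of_int (lucZ m) * real_of_int (lucZ (m * n)) * real_of_int (lucZ (m * n + m))
       + (-1) powi (n * (m - 1)) * 4 * real_of_int (lucZ (2 * m)))
    / (5 * real_of_int (lucZ m) * real_of_int (lucZ (2 * m)))"
proof -
  define a where "a = phi powi m"
  define b where "b = psi powi m"
  define s where "s = (-1::real) powi m"
  define r where "r = sqrt (5::real)"
  have rr: "r * r = 5" unfolding r_def by simp
  have ab: "a * b = s" unfolding a_def b_def s_def
    by (simp add: power_int_mult_distrib[symmetric] phipsi(1))
  have s2: "s * s = 1" using m1_powi[of m] unfolding s_def by auto
  have a0: "a \<noteq> 0" unfolding a_def using phipsi(3) by simp
  have b0: "b \<noteq> 0" unfolding b_def using phipsi(4) by simp
  define D where "D = (a + b) * (a^2 + b^2)"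
  have Lm: "real_of_int (lucZ m) = a + b" unfolding a_def b_def by (simp add: lucZ_binet)
  have L2m: "real_of_int (lucZ (2*m)) = a^2 + b^2"
  proof -
    have "phi powi (2*m) = a^2" "psi powi (2*m) = b^2" unfolding a_def b_def
      by (simp_all add: mult.commute[of 2 m] power_int_mult)
    then show ?thesis by (simp add: lucZ_binet)
  qed
  have D0: "D \<noteq> 0" unfolding D_def using lucZ_nz[of m] lucZ_nz[of "2*m"]
    by (simp flip: Lm L2m)
  define X where "X k = a powi k" for k
  define Y where "Y k = b powi k" for k
  define G where "G k = (-1::real) powi k" for k
  have pm: "phi powi (m*k) = X k" "psi powi (m*k) = Y k" for k
    unfolding X_def Y_def a_def b_def by (simp_all add: power_int_mult)
  have pm1: "phi powi (m*k+m) = X k * a" "psi powi (m*k+m) = Y k * b" for k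
    unfolding a_def b_def using phipsi(3,4) by (simp_all add: power_int_add pm[unfolded a_def b_def])
  have F1: "real_of_int (fibZ (m*k)) = (X k - Y k)/r" for k
    by (simp add: fibZ_binet pm r_def)
  have F2: "real_of_int (fibZ (m*k+m)) = (X k * a - Y k * b)/r" for k
    by (simp add: fibZ_binet pm1 r_def)
  have L1: "real_of_int (lucZ (m*k)) = X k + Y k" for k
    by (simp add: lucZ_binet pm)
  have L2: "real_of_int (lucZ (m*k+m)) = X k * a + Y k * b" for k
    by (simp add: lucZ_binet pm1)
  have XY: "X k * Y k = s powi k" for k
    unfolding X_def Y_def by (simp add: power_int_mult_distrib[symmetric] ab)
  have sg1: "(-1::real) powi (k-1) = - G k" for k
    unfolding G_def by (simp add: power_int_diff)
  have sg2: "(-1::real) powi (k*(m-1)) = X k * Y k * G k" for k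
  proof -
    have "(-1::real) powi (k*(m-1)) = (-1) powi (m*k + (-k))" by (simp add: algebra_simps)
    also have "... = (-1) powi (m*k) * (-1) powi (-k)" by (rule power_int_add) simp
    also have "... = s powi k * G k" unfolding s_def G_def
      by (simp add: power_int_mult power_int_minus_one_minus)
    finally show ?thesis using XY by simp
  qed
  define R where "R k = real_of_int (fibZ (m * k)) * real_of_int (fibZ (m * k + m)) *
      ((-1) powi (k - 1) * real_of_int (lucZ m) * real_of_int (lucZ (m * k)) * real_of_int (lucZ (m * k + m))
       + (-1) powi (k * (m - 1)) * 4 * real_of_int (lucZ (2 * m)))
    / (5 * real_of_int (lucZ m) * real_of_int (lucZ (2 * m)))" for k
  define S where "S k = sumZ (\<lambda>k. (-1) powi (k - 1) * (real_of_int (fibZ (m * k))) ^ 4) 1 k" for k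
  have Rf: "R k = (X k - Y k) * (X k * a - Y k * b) * ((- G k)*(a+b)*(X k + Y k)*(X k * a + Y k * b)
      + X k * Y k * G k * 4 * (a^2+b^2)) / (25 * D)" for k
    unfolding R_def F1 F2 L1 L2 Lm L2m sg1 sg2 D_def frac5b[OF rr] ..
  have Xm: "X (k-1) = s*b*X k" "Y (k-1) = s*a*Y k" "G (k-1) = - G k" for k
  proof -
    have ia: "inverse a = s*b" using ab s2 a0 by (simp add: field_simps) (metis mult.assoc mult.commute mult_1)
    have ib: "inverse b = s*a" using ab s2 b0 by (simp add: field_simps) (metis mult.assoc mult.commute mult_1)
    show "X (k-1) = s*b*X k" unfolding X_def using a0 ia by (simp add: power_int_diff field_simps)
    show "Y (k-1) = s*a*Y k" unfolding Y_def using b0 ib by (simp add: power_int_diff field_simps)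
    show "G (k-1) = - G k" unfolding G_def by (simp add: power_int_diff)
  qed
  have step: "S k - S (k-1) = R k - R (k-1)" for k
  proof -
    have lhs: "S k - S (k-1) = (- G k) * ((X k - Y k)/r)^4"
      unfolding S_def by (simp add: sumZ_step sg1 F1)
    have g2: "G k * G k = 1" using m1_powi[of k] unfolding G_def by auto
    have tr: "(s = 1 \<and> X k * Y k = 1) \<or> (s = -1 \<and> X k * Y k = G k)"
      using m1_powi[of m] unfolding XY G_def s_def by auto
    have "R k - R (k-1) = ((X k - Y k) * (X k * a - Y k * b) * ((- G k)*(a+b)*(X k + Y k)*(X k * a + Y k * b)
      + X k * Y k * G k * 4 * (a^2+b^2))
      - (s*b*X k - s*a*Y k) * ((s*b*X k) * a - (s*a*Y k) * b) * ((-(- G k))*(a+b)*(s*b*X k + s*a*Y k)*((s*b*X k) * a + (s*a*Y k) * b)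
      + (s*b*X k) * (s*a*Y k) * (- G k) * 4 * (a^2+b^2))) / (25 * D)"
      unfolding Rf Xm by (simp add: diff_divide_distrib)
    also have "... = - G k * (X k - Y k)^4 / 25"
      unfolding keyq[OF ab s2 g2 tr] D_def[symmetric] using D0 by simp
    finally show ?thesis unfolding lhs pow4_5[OF rr] by simp
  qed
  have base: "S 0 = R 0" unfolding S_def R_def sumZ_def by (simp add: fibZ_def)
  have "S n = R n" by (rule diff_induct[of S R, OF base step])
  then show ?thesis unfolding S_def R_def .
qed

end
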